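(* Let $G$ be any connected graph on $N\ge2$ vertices and, for $x\ge0$, let $$\rho_N(x)=\frac{\mathbb{1}+x|\psi_G\rangle\langle\psi_G|}{2^N+x}$$ be the maximally (globally) depolarized graph state. If $x\le 2$, equivalently if the fidelity $\langle\psi_G|\rho_N(x)|\psi_G\rangle=(1+x)/(2^N+x)$ is at most $3/(2^N+2)$, then $\rho_N(x)$ cannot be purified to $|\psi_G\rangle$ by any protocol.
   Context: Graph state $|\psi_G\rangle$: common $+1$ eigenstate of $K_i=X_i\prod_{\{i,j\}\in E_G}Z_j$ (equivalently $|+\rangle^{\otimes N}$ followed by controlled-phase gates along every edge). Purification: each qubit held by a distinct party holding that qubit from arbitrarily many copies; using SLOCC they must produce $|\psi_G\rangle$ with fidelity arbitrarily close to 1. Known input: a two-qubit Bell-diagonal state with weight $\lambda_{00}$ on the target Bell state is purifiable iff $\lambda_{00}>1/2$. *)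

theory Defs
  imports Complex_Main "HOL-Library.FuncSet"
begin

definition simple_graph :: "nat \<Rightarrow> (nat \<Rightarrow> nat \<Rightarrow> bool) \<Rightarrow> bool" where
  "simple_graph N E \<longleftrightarrow>
     (\<forall>i j. E i j \<longrightarrow> i < N \<and> j < N \<and> i \<noteq> j) \<and> (\<forall>i j. E i j \<longrightarrow> E j i)"

definition connected_graph :: "nat \<Rightarrow> (nat \<Rightarrow> nat \<Rightarrow> bool) \<Rightarrow> bool" where
  "connected_graph N E \<longleftrightarrow> simple_graph N E \<and> (\<forall>i<N. \<forall>j<N. E\<^sup>*\<^sup>* i j)"

definition basis :: "nat \<Rightarrow> (nat \<Rightarrow> bool) set" where
  "basis N = PiE {..<N} (\<lambda>_. UNIV)"

(* |psi_G> = prod_{edges} CZ |+>^N, whose amplitude on |z> is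
   2^(-N/2) (-1)^(number of edges {i,j} with z_i = z_j = 1). *)
definition graph_state :: "nat \<Rightarrow> (nat \<Rightarrow> nat \<Rightarrow> bool) \<Rightarrow> (nat \<Rightarrow> bool) \<Rightarrow> complex" where
  "graph_state N E z =
     complex_of_real ((-1) ^ card {(i, j). i < j \<and> j < N \<and> E i j \<and> z i \<and> z j} / sqrt (2 ^ N))"

definition depol_state ::
  "nat \<Rightarrow> (nat \<Rightarrow> nat \<Rightarrow> bool) \<Rightarrow> real \<Rightarrow> (nat \<Rightarrow> bool) \<Rightarrow> (nat \<Rightarrow> bool) \<Rightarrow> complex" where
  "depol_state N E x z w =
     ((if z = w then 1 else 0) + complex_of_real x * graph_state N E z * cnj (graph_state N E w))
       / complex_of_real (2 ^ N + x)"

(* Basis labels of k copies of an N-qubit state, grouped by party: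
   b i j = bit of qubit i in copy j. Party i holds the qubits b i 0, ..., b i (k-1). *)
definition copies_basis :: "nat \<Rightarrow> nat \<Rightarrow> (nat \<Rightarrow> nat \<Rightarrow> bool) set" where
  "copies_basis N k = PiE {..<N} (\<lambda>_. PiE {..<k} (\<lambda>_. UNIV))"

definition copy_of :: "nat \<Rightarrow> (nat \<Rightarrow> nat \<Rightarrow> bool) \<Rightarrow> nat \<Rightarrow> (nat \<Rightarrow> bool)" where
  "copy_of N b j = (\<lambda>i\<in>{..<N}. b i j)"

definition tensor_power ::
  "nat \<Rightarrow> nat \<Rightarrow> ((nat \<Rightarrow> bool) \<Rightarrow> (nat \<Rightarrow> bool) \<Rightarrow> complex)
     \<Rightarrow> (nat \<Rightarrow> nat \<Rightarrow> bool) \<Rightarrow> (nat \<Rightarrow> nat \<Rightarrow> bool) \<Rightarrow> complex" where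
  "tensor_power N k rho b b' = (\<Prod>j<k. rho (copy_of N b j) (copy_of N b' j))"

(* SLOCC branch: party i applies a local operator A i : C^(2^k) \<rightarrow> C^2, given by its
   matrix entries A i c v (output bit c, input label v : {..<k} \<rightarrow> bool). *)
definition slocc_output ::
  "nat \<Rightarrow> nat \<Rightarrow> (nat \<Rightarrow> bool \<Rightarrow> (nat \<Rightarrow> bool) \<Rightarrow> complex)
     \<Rightarrow> ((nat \<Rightarrow> nat \<Rightarrow> bool) \<Rightarrow> (nat \<Rightarrow> nat \<Rightarrow> bool) \<Rightarrow> complex)
     \<Rightarrow> (nat \<Rightarrow> bool) \<Rightarrow> (nat \<Rightarrow> bool) \<Rightarrow> complex" where
  "slocc_output N k A R c c' =
     (\<Sum>b\<in>copies_basis N k. \<Sum>b'\<in>copies_basis N k.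
        (\<Prod>i<N. A i (c i) (b i)) * R b b' * (\<Prod>i<N. cnj (A i (c' i) (b' i))))"

definition trace_op :: "nat \<Rightarrow> ((nat \<Rightarrow> bool) \<Rightarrow> (nat \<Rightarrow> bool) \<Rightarrow> complex) \<Rightarrow> complex" where
  "trace_op N S = (\<Sum>c\<in>basis N. S c c)"

definition fidelity ::
  "nat \<Rightarrow> ((nat \<Rightarrow> bool) \<Rightarrow> complex) \<Rightarrow> ((nat \<Rightarrow> bool) \<Rightarrow> (nat \<Rightarrow> bool) \<Rightarrow> complex) \<Rightarrow> real" where
  "fidelity N phi S =
     Re ((\<Sum>c\<in>basis N. \<Sum>c'\<in>basis N. cnj (phi c) * S c c' * phi c') / trace_op N S)"

(* rho (an N-qubit state, one qubit per party) is purifiable to phi iff for every eps > 0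
   there is a number k of copies and an SLOCC branch (product of local operators) with
   nonzero success probability whose normalised output has fidelity >= 1 - eps with phi. *)
definition purifiable ::
  "nat \<Rightarrow> ((nat \<Rightarrow> bool) \<Rightarrow> (nat \<Rightarrow> bool) \<Rightarrow> complex) \<Rightarrow> ((nat \<Rightarrow> bool) \<Rightarrow> complex) \<Rightarrow> bool" where
  "purifiable N rho phi \<longleftrightarrow>
     (\<forall>\<epsilon>>0. \<exists>k A. let S = slocc_output N k A (tensor_power N k rho) in
        trace_op N S \<noteq> 0 \<and> fidelity N phi S \<ge> 1 - \<epsilon>)"

end

theory Submission
  imports Defs
begin


lemma sum_PiE_split:
  fixes F :: "_ \<Rightarrow> 'c::comm_monoid_add"
  assumes "finite (T n)" "\<forall>i<n. finite (T i)"
  shows "(\<Sum>b\<in>PiE {..<Suc n} T. F b) = (\<Sum>y\<in>T n. \<Sum>r\<in>PiE {..<n} T. F (r(n:=y)))"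
proof -
  have fin: "finite (PiE {..<n} T)" using assms by (intro finite_PiE) auto
  have "(\<Sum>b\<in>PiE {..<Suc n} T. F b) = (\<Sum>b\<in>(\<lambda>(y, g). g(n := y)) ` (T n \<times> PiE {..<n} T). F b)"
    by (simp add: lessThan_Suc PiE_insert_eq)
  also have "\<dots> = (\<Sum>p\<in>T n \<times> PiE {..<n} T. F ((snd p)(n := fst p)))"
    by (subst sum.reindex) (auto intro!: inj_combinator simp: case_prod_beta)
  also have "\<dots> = (\<Sum>y\<in>T n. \<Sum>r\<in>PiE {..<n} T. F (r(n:=y)))"
    by (simp add: sum.cartesian_product case_prod_beta)
  finally show ?thesis .
qed

lemma finite_basis[simp]: "finite (basis n)"
  unfolding basis_def by (intro finite_PiE) auto

lemma finite_copies_basis[simp]: "finite (copies_basis n k)"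
  unfolding copies_basis_def by (intro finite_PiE) (auto intro: finite_PiE)

lemma copy_of_basis[simp]: "copy_of N b j \<in> basis N"
  unfolding copy_of_def basis_def by auto

lemma upd_restrict:
  assumes "z \<in> PiE {..<Suc n} T" shows "(restrict z {..<n})(n := z n) = z"
  using assms by (auto simp: PiE_def extensional_def fun_eq_iff)

lemma restrict_upd:
  fixes n :: nat
  assumes "r \<in> PiE {..<n} T" shows "restrict (r(n:=y)) {..<n} = r"
proof
  fix i show "restrict (r(n:=y)) {..<n} i = r i"
    using assms by (cases "i < n") (auto simp: PiE_def extensional_def)
qed

lemma quad_decomp:
  fixes p q :: "'x \<Rightarrow> complex" and U :: "'m \<Rightarrow> 'x \<Rightarrow> complex"
  shows "(\<Sum>c\<in>X. \<Sum>c'\<in>X. p c * (\<Sum>M\<in>J. U M c * cnj (U M c')) * q c') =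
    (\<Sum>M\<in>J. (\<Sum>c\<in>X. p c * U M c) * (\<Sum>c'\<in>X. cnj (U M c') * q c'))"
proof -
  have "(\<Sum>c\<in>X. \<Sum>c'\<in>X. p c * (\<Sum>M\<in>J. U M c * cnj (U M c')) * q c') =
     (\<Sum>c\<in>X. \<Sum>c'\<in>X. \<Sum>M\<in>J. (p c * U M c) * (cnj (U M c') * q c'))"
    by (simp add: sum_distrib_left sum_distrib_right mult_ac)
  also have "\<dots> = (\<Sum>c\<in>X. \<Sum>M\<in>J. \<Sum>c'\<in>X. (p c * U M c) * (cnj (U M c') * q c'))"
    by (intro sum.cong refl sum.swap)
  also have "\<dots> = (\<Sum>M\<in>J. \<Sum>c\<in>X. \<Sum>c'\<in>X. (p c * U M c) * (cnj (U M c') * q c'))"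
    by (rule sum.swap)
  also have "\<dots> = (\<Sum>M\<in>J. (\<Sum>c\<in>X. p c * U M c) * (\<Sum>c'\<in>X. cnj (U M c') * q c'))"
    by (simp add: sum_product)
  finally show ?thesis .
qed

lemma tensor_decomp:
  assumes fin: "finite I"
    and dec: "\<And>z w. z \<in> basis N \<Longrightarrow> w \<in> basis N \<Longrightarrow> rho z w = (\<Sum>m\<in>I. f m z * cnj (f m w))"
  shows "tensor_power N k rho b b' =
    (\<Sum>M\<in>PiE {..<k} (\<lambda>_. I). (\<Prod>j<k. f (M j) (copy_of N b j)) * cnj (\<Prod>j<k. f (M j) (copy_of N b' j)))"
proof -
  have "tensor_power N k rho b b' = (\<Prod>j<k. \<Sum>m\<in>I. f m (copy_of N b j) * cnj (f m (copy_of N b' j)))"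
    unfolding tensor_power_def by (intro prod.cong refl dec) auto
  also have "\<dots> = (\<Sum>M\<in>PiE {..<k} (\<lambda>_. I). \<Prod>j<k. f (M j) (copy_of N b j) * cnj (f (M j) (copy_of N b' j)))"
    by (rule prod_sum_PiE) (auto simp: fin)
  also have "\<dots> = (\<Sum>M\<in>PiE {..<k} (\<lambda>_. I). (\<Prod>j<k. f (M j) (copy_of N b j)) * cnj (\<Prod>j<k. f (M j) (copy_of N b' j)))"
    by (simp add: prod.distrib cnj_prod)
  finally show ?thesis .
qed

lemma slocc_decomp:
  assumes dec: "\<And>b b'. b \<in> copies_basis N k \<Longrightarrow> b' \<in> copies_basis N k \<Longrightarrow> R b b' = (\<Sum>M\<in>J. F M b * cnj (F M b'))"
  shows "slocc_output N k A R c c' = (\<Sum>M\<in>J. (\<Sum>b\<in>copies_basis N k. (\<Prod>i<N. A i (c i) (b i)) * F M b) *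
      cnj (\<Sum>b\<in>copies_basis N k. (\<Prod>i<N. A i (c' i) (b i)) * F M b))"
proof -
  have "slocc_output N k A R c c' = (\<Sum>b\<in>copies_basis N k. \<Sum>b'\<in>copies_basis N k.
        (\<Prod>i<N. A i (c i) (b i)) * (\<Sum>M\<in>J. F M b * cnj (F M b')) * (\<Prod>i<N. cnj (A i (c' i) (b' i))))"
    unfolding slocc_output_def by (intro sum.cong refl) (simp add: dec)
  also have "\<dots> = (\<Sum>M\<in>J. (\<Sum>b\<in>copies_basis N k. (\<Prod>i<N. A i (c i) (b i)) * F M b) *
      (\<Sum>b'\<in>copies_basis N k. cnj (F M b') * (\<Prod>i<N. cnj (A i (c' i) (b' i)))))"
    by (rule quad_decomp)
  also have "\<dots> = (\<Sum>M\<in>J. (\<Sum>b\<in>copies_basis N k. (\<Prod>i<N. A i (c i) (b i)) * F M b) *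
      cnj (\<Sum>b\<in>copies_basis N k. (\<Prod>i<N. A i (c' i) (b i)) * F M b))"
    by (simp add: cnj_sum cnj_prod mult.commute)
  finally show ?thesis .
qed

lemma local_product:
  fixes A :: "nat \<Rightarrow> bool \<Rightarrow> (nat \<Rightarrow> bool) \<Rightarrow> complex" and F :: "(nat \<Rightarrow> nat \<Rightarrow> bool) \<Rightarrow> complex"
  assumes fac: "\<And>b. b \<in> copies_basis (Suc n) k \<Longrightarrow> F b = G (b n) * H (restrict b {..<n})"
  shows "(\<Sum>b\<in>copies_basis (Suc n) k. (\<Prod>i<Suc n. A i (c i) (b i)) * F b) =
    (\<Sum>y\<in>PiE {..<k} (\<lambda>_. UNIV). A n (c n) y * G y) *
    (\<Sum>r\<in>copies_basis n k. (\<Prod>i<n. A i (c i) (r i)) * H r)"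
proof -
  let ?T = "\<lambda>_::nat. PiE {..<k} (\<lambda>_::nat. UNIV :: bool set)"
  have finT: "finite (?T i)" for i by (intro finite_PiE) auto
  have "(\<Sum>b\<in>copies_basis (Suc n) k. (\<Prod>i<Suc n. A i (c i) (b i)) * F b) =
     (\<Sum>y\<in>?T n. \<Sum>r\<in>PiE {..<n} ?T. (\<Prod>i<Suc n. A i (c i) ((r(n:=y)) i)) * F (r(n:=y)))"
    unfolding copies_basis_def by (rule sum_PiE_split) (auto simp: finT)
  also have "\<dots> = (\<Sum>y\<in>?T n. \<Sum>r\<in>PiE {..<n} ?T. (A n (c n) y * G y) * ((\<Prod>i<n. A i (c i) (r i)) * H r))"
  proof (intro sum.cong refl)
    fix y r assume y: "y \<in> ?T n" and r: "r \<in> PiE {..<n} ?T"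
    have mem: "r(n:=y) \<in> copies_basis (Suc n) k"
      using y r unfolding copies_basis_def lessThan_Suc PiE_insert_eq by auto
    have "(\<Prod>i<Suc n. A i (c i) ((r(n:=y)) i)) = (\<Prod>i<n. A i (c i) (r i)) * A n (c n) y"
      by (simp add: prod.lessThan_Suc)
    moreover have "F (r(n:=y)) = G y * H r"
      using fac[OF mem] restrict_upd[OF r] by simp
    ultimately show "(\<Prod>i<Suc n. A i (c i) ((r(n:=y)) i)) * F (r(n:=y)) =
       (A n (c n) y * G y) * ((\<Prod>i<n. A i (c i) (r i)) * H r)" by (simp add: mult_ac)
  qed
  also have "\<dots> = (\<Sum>y\<in>PiE {..<k} (\<lambda>_. UNIV). A n (c n) y * G y) *
    (\<Sum>r\<in>copies_basis n k. (\<Prod>i<n. A i (c i) (r i)) * H r)"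
    unfolding copies_basis_def by (rule sum_product[symmetric])
  finally show ?thesis .
qed



lemma bessel2:
  fixes e0 e1 v :: "'x \<Rightarrow> complex"
  assumes n0: "(\<Sum>r\<in>R. cnj (e0 r) * e0 r) = 1/2" and n1: "(\<Sum>r\<in>R. cnj (e1 r) * e1 r) = 1/2"
    and o: "(\<Sum>r\<in>R. cnj (e0 r) * e1 r) = 0"
  shows "cmod (\<Sum>r\<in>R. cnj (e0 r) * v r)^2 + cmod (\<Sum>r\<in>R. cnj (e1 r) * v r)^2 \<le> 1/2 * (\<Sum>r\<in>R. cmod (v r)^2)"
proof -
  define a0 where "a0 = (\<Sum>r\<in>R. cnj (e0 r) * v r)"
  define a1 where "a1 = (\<Sum>r\<in>R. cnj (e1 r) * v r)"
  define p where "p r = a0 * e0 r + a1 * e1 r" for r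
  have ca0: "cnj a0 = (\<Sum>r\<in>R. e0 r * cnj (v r))" unfolding a0_def by (simp add: cnj_sum)
  have ca1: "cnj a1 = (\<Sum>r\<in>R. e1 r * cnj (v r))" unfolding a1_def by (simp add: cnj_sum)
  have n0': "(\<Sum>r\<in>R. e0 r * cnj (e0 r)) = 1/2" using n0 by (simp add: mult.commute)
  have n1': "(\<Sum>r\<in>R. e1 r * cnj (e1 r)) = 1/2" using n1 by (simp add: mult.commute)
  have o1: "(\<Sum>r\<in>R. e1 r * cnj (e0 r)) = 0" using o by (simp add: mult.commute)
  have o2: "(\<Sum>r\<in>R. e0 r * cnj (e1 r)) = 0"
  proof -
    have "(\<Sum>r\<in>R. e0 r * cnj (e1 r)) = cnj (\<Sum>r\<in>R. cnj (e0 r) * e1 r)" by (simp add: cnj_sum mult.commute)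
    then show ?thesis using o by simp
  qed
  define s where "s = a0 * cnj a0 + a1 * cnj a1"
  have s_real: "s = of_real (cmod a0 ^ 2 + cmod a1 ^ 2)"
    unfolding s_def by (simp only: of_real_add complex_norm_square)
  have pv: "(\<Sum>r\<in>R. p r * cnj (v r)) = s"
    unfolding p_def s_def ca0 ca1 by (simp add: ring_distribs sum.distrib sum_distrib_left mult_ac)
  have vp: "(\<Sum>r\<in>R. v r * cnj (p r)) = s"
  proof -
    have "(\<Sum>r\<in>R. v r * cnj (p r)) = cnj (\<Sum>r\<in>R. p r * cnj (v r))" by (simp add: cnj_sum mult.commute)
    also have "\<dots> = cnj s" using pv by simp
    also have "\<dots> = s" unfolding s_def by (simp add: mult.commute add.commute)
    finally show ?thesis .
  qed
  have pp: "(\<Sum>r\<in>R. p r * cnj (p r)) = s / 2"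
  proof -
    have "(\<Sum>r\<in>R. p r * cnj (p r)) = a0 * cnj a0 * (\<Sum>r\<in>R. e0 r * cnj (e0 r)) + a0 * cnj a1 * (\<Sum>r\<in>R. e0 r * cnj (e1 r))
       + a1 * cnj a0 * (\<Sum>r\<in>R. e1 r * cnj (e0 r)) + a1 * cnj a1 * (\<Sum>r\<in>R. e1 r * cnj (e1 r))"
      unfolding p_def by (simp add: ring_distribs sum.distrib sum_distrib_left mult_ac)
    also have "\<dots> = s / 2" unfolding n0' n1' o1 o2 s_def by (simp add: field_simps)
    finally show ?thesis .
  qed
  have nv: "complex_of_real (\<Sum>r\<in>R. cmod (v r)^2) = (\<Sum>r\<in>R. v r * cnj (v r))"
    by (simp only: of_real_sum complex_norm_square)
  have "complex_of_real (\<Sum>r\<in>R. cmod (v r - 2 * p r)^2) = (\<Sum>r\<in>R. (v r - 2 * p r) * cnj (v r - 2 * p r))"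
    by (simp only: of_real_sum complex_norm_square)
  also have "\<dots> = (\<Sum>r\<in>R. v r * cnj (v r)) - 2 * (\<Sum>r\<in>R. v r * cnj (p r)) - 2 * (\<Sum>r\<in>R. p r * cnj (v r))
      + 4 * (\<Sum>r\<in>R. p r * cnj (p r))"
    by (simp add: ring_distribs sum.distrib sum_subtractf sum_distrib_left mult_ac)
  also have "\<dots> = complex_of_real (\<Sum>r\<in>R. cmod (v r)^2) - 2 * s"
    unfolding vp pv pp nv by (simp add: algebra_simps)
  also have "\<dots> = complex_of_real ((\<Sum>r\<in>R. cmod (v r)^2) - 2 * (cmod a0 ^ 2 + cmod a1 ^ 2))"
    unfolding s_real by simp
  finally have "(\<Sum>r\<in>R. cmod (v r - 2 * p r)^2) = (\<Sum>r\<in>R. cmod (v r)^2) - 2 * (cmod a0 ^ 2 + cmod a1 ^ 2)"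
    using of_real_eq_iff by blast
  moreover have "0 \<le> (\<Sum>r\<in>R. cmod (v r - 2 * p r)^2)" by (simp add: sum_nonneg)
  ultimately have "2 * (cmod a0 ^ 2 + cmod a1 ^ 2) \<le> (\<Sum>r\<in>R. cmod (v r)^2)" by linarith
  then show ?thesis unfolding a0_def[symmetric] a1_def[symmetric] by simp
qed

lemma real_cs2:
  fixes p q r s :: real
  shows "(p*q+r*s)^2 \<le> (p^2+r^2)*(q^2+s^2)"
proof -
  have "(p^2+r^2)*(q^2+s^2) - (p*q+r*s)^2 = (p*s - r*q)^2" by (simp add: power2_eq_square algebra_simps)
  moreover have "0 \<le> (p*s - r*q)^2" by simp
  ultimately show ?thesis by linarith
qed

lemma cs2:
  fixes u0 u1 a0 a1 :: complex
  shows "cmod (u0 * a0 + u1 * a1)^2 \<le> (cmod u0 ^2 + cmod u1 ^2) * (cmod a0 ^2 + cmod a1 ^2)"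
proof -
  have "cmod (u0 * a0 + u1 * a1) \<le> cmod u0 * cmod a0 + cmod u1 * cmod a1"
    by (metis norm_mult norm_triangle_ineq)
  hence "cmod (u0 * a0 + u1 * a1)^2 \<le> (cmod u0 * cmod a0 + cmod u1 * cmod a1)^2"
    by (intro power_mono) auto
  also have "\<dots> \<le> (cmod u0 ^2 + cmod u1 ^2) * (cmod a0 ^2 + cmod a1 ^2)"
    by (rule real_cs2)
  finally show ?thesis .
qed



lemma basis_split: "(\<Sum>c\<in>basis (Suc n). F c) = (\<Sum>y\<in>UNIV. \<Sum>r\<in>basis n. F (r(n:=y)))"
  unfolding basis_def by (rule sum_PiE_split) auto

lemma basis_restrict_upd: "r \<in> basis n \<Longrightarrow> restrict (r(n:=y)) {..<n} = r"
  unfolding basis_def by (rule restrict_upd)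

lemma basis_restrict: "r \<in> basis n \<Longrightarrow> restrict r {..<n} = r"
  unfolding basis_def by (rule PiE_restrict)

lemma product_bound:
  fixes \<psi> :: "(nat \<Rightarrow> bool) \<Rightarrow> complex" and u :: "bool \<Rightarrow> complex" and v :: "(nat \<Rightarrow> bool) \<Rightarrow> complex"
  assumes n0: "(\<Sum>r\<in>basis n. cnj (\<psi> (r(n:=False))) * \<psi> (r(n:=False))) = 1/2"
    and n1: "(\<Sum>r\<in>basis n. cnj (\<psi> (r(n:=True))) * \<psi> (r(n:=True))) = 1/2"
    and o: "(\<Sum>r\<in>basis n. cnj (\<psi> (r(n:=False))) * \<psi> (r(n:=True))) = 0"
  shows "cmod (\<Sum>c\<in>basis (Suc n). cnj (\<psi> c) * (u (c n) * v (restrict c {..<n})))^2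
     \<le> 1/2 * (\<Sum>c\<in>basis (Suc n). cmod (u (c n) * v (restrict c {..<n}))^2)"
proof -
  define a where "a y = (\<Sum>r\<in>basis n. cnj (\<psi> (r(n:=y))) * v r)" for y
  have "(\<Sum>c\<in>basis (Suc n). cnj (\<psi> c) * (u (c n) * v (restrict c {..<n})))
     = (\<Sum>y\<in>UNIV. \<Sum>r\<in>basis n. cnj (\<psi> (r(n:=y))) * (u y * v r))"
    unfolding basis_split by (intro sum.cong refl) (simp add: basis_restrict_upd basis_restrict)
  also have "\<dots> = (\<Sum>y\<in>UNIV. u y * a y)"
    unfolding a_def by (simp add: sum_distrib_left mult_ac)
  also have "\<dots> = u False * a False + u True * a True" by (simp add: UNIV_bool)
  finally have lhs: "(\<Sum>c\<in>basis (Suc n). cnj (\<psi> c) * (u (c n) * v (restrict c {..<n}))) = u False * a False + u True * a True" .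
  have "(\<Sum>c\<in>basis (Suc n). cmod (u (c n) * v (restrict c {..<n}))^2)
     = (\<Sum>y\<in>UNIV. \<Sum>r\<in>basis n. cmod (u y)^2 * cmod (v r)^2)"
    unfolding basis_split by (intro sum.cong refl) (simp add: basis_restrict_upd basis_restrict norm_mult power_mult_distrib)
  also have "\<dots> = (cmod (u False)^2 + cmod (u True)^2) * (\<Sum>r\<in>basis n. cmod (v r)^2)"
    by (simp add: UNIV_bool sum_distrib_left ring_distribs sum.distrib)
  finally have rhs: "(\<Sum>c\<in>basis (Suc n). cmod (u (c n) * v (restrict c {..<n}))^2)
     = (cmod (u False)^2 + cmod (u True)^2) * (\<Sum>r\<in>basis n. cmod (v r)^2)" .
  have b: "cmod (a False)^2 + cmod (a True)^2 \<le> 1/2 * (\<Sum>r\<in>basis n. cmod (v r)^2)"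
    unfolding a_def by (rule bessel2[OF n0 n1 o])
  have "cmod (u False * a False + u True * a True)^2 \<le> (cmod (u False)^2 + cmod (u True)^2) * (cmod (a False)^2 + cmod (a True)^2)"
    by (rule cs2)
  also have "\<dots> \<le> (cmod (u False)^2 + cmod (u True)^2) * (1/2 * (\<Sum>r\<in>basis n. cmod (v r)^2))"
    by (intro mult_left_mono b) auto
  finally show ?thesis unfolding lhs rhs by (simp add: mult_ac)
qed

lemma fidelity_bound:
  fixes \<psi> :: "(nat \<Rightarrow> bool) \<Rightarrow> complex" and U :: "'m \<Rightarrow> (nat \<Rightarrow> bool) \<Rightarrow> complex"
  assumes n0: "(\<Sum>r\<in>basis n. cnj (\<psi> (r(n:=False))) * \<psi> (r(n:=False))) = 1/2"
    and n1: "(\<Sum>r\<in>basis n. cnj (\<psi> (r(n:=True))) * \<psi> (r(n:=True))) = 1/2"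
    and o: "(\<Sum>r\<in>basis n. cnj (\<psi> (r(n:=False))) * \<psi> (r(n:=True))) = 0"
    and dec: "\<And>c c'. c \<in> basis (Suc n) \<Longrightarrow> c' \<in> basis (Suc n) \<Longrightarrow> S c c' = (\<Sum>M\<in>J. U M c * cnj (U M c'))"
    and fac: "\<And>M c. c \<in> basis (Suc n) \<Longrightarrow> U M c = u M (c n) * v M (restrict c {..<n})"
    and tr: "trace_op (Suc n) S \<noteq> 0"
  shows "fidelity (Suc n) \<psi> S \<le> 1/2"
proof -
  define X where "X = basis (Suc n)"
  define ip where "ip M = (\<Sum>c\<in>X. cnj (\<psi> c) * U M c)" for M
  define na where "na = (\<Sum>M\<in>J. cmod (ip M)^2)"
  define t where "t = (\<Sum>M\<in>J. \<Sum>c\<in>X. cmod (U M c)^2)"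
  have "(\<Sum>c\<in>X. \<Sum>c'\<in>X. cnj (\<psi> c) * S c c' * \<psi> c') =
     (\<Sum>c\<in>X. \<Sum>c'\<in>X. cnj (\<psi> c) * (\<Sum>M\<in>J. U M c * cnj (U M c')) * \<psi> c')"
    unfolding X_def by (intro sum.cong refl) (simp add: dec)
  also have "\<dots> = (\<Sum>M\<in>J. (\<Sum>c\<in>X. cnj (\<psi> c) * U M c) * (\<Sum>c'\<in>X. cnj (U M c') * \<psi> c'))"
    by (rule quad_decomp)
  also have "\<dots> = (\<Sum>M\<in>J. ip M * cnj (ip M))"
    unfolding ip_def by (simp add: cnj_sum mult.commute)
  also have "\<dots> = complex_of_real na"
    unfolding na_def by (simp only: of_real_sum complex_norm_square)
  finally have num: "(\<Sum>c\<in>X. \<Sum>c'\<in>X. cnj (\<psi> c) * S c c' * \<psi> c') = complex_of_real na" .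
  have "trace_op (Suc n) S = (\<Sum>c\<in>X. \<Sum>M\<in>J. U M c * cnj (U M c))"
    unfolding trace_op_def X_def by (intro sum.cong refl) (simp add: dec)
  also have "\<dots> = (\<Sum>M\<in>J. \<Sum>c\<in>X. U M c * cnj (U M c))" by (rule sum.swap)
  also have "\<dots> = complex_of_real t"
    unfolding t_def by (simp only: of_real_sum complex_norm_square)
  finally have trace: "trace_op (Suc n) S = complex_of_real t" .
  have t0: "t \<noteq> 0" using tr trace by auto
  have "na \<le> (\<Sum>M\<in>J. 1/2 * (\<Sum>c\<in>X. cmod (U M c)^2))"
    unfolding na_def
  proof (rule sum_mono)
    fix M assume "M \<in> J"
    have "ip M = (\<Sum>c\<in>basis (Suc n). cnj (\<psi> c) * (u M (c n) * v M (restrict c {..<n})))"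
      unfolding ip_def X_def by (intro sum.cong refl) (simp add: fac)
    moreover have "(\<Sum>c\<in>X. cmod (U M c)^2) = (\<Sum>c\<in>basis (Suc n). cmod (u M (c n) * v M (restrict c {..<n}))^2)"
      unfolding X_def by (intro sum.cong refl) (simp add: fac)
    ultimately show "cmod (ip M)^2 \<le> 1/2 * (\<Sum>c\<in>X. cmod (U M c)^2)"
      using product_bound[OF n0 n1 o, of "u M" "v M"] by simp
  qed
  also have "\<dots> = t / 2" unfolding t_def sum_distrib_left[symmetric] by simp
  finally have nat: "na \<le> t / 2" .
  have "t \<ge> 0" unfolding t_def by (intro sum_nonneg) auto
  with t0 have tpos: "t > 0" by simp
  have "fidelity (Suc n) \<psi> S = na / t"
    unfolding fidelity_def X_def[symmetric] num trace by (simp add: Re_divide_of_real)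
  also have "\<dots> \<le> 1/2" using nat tpos by (simp add: divide_simps)
  finally show ?thesis .
qed



definition cnt :: "nat \<Rightarrow> (nat \<Rightarrow> nat \<Rightarrow> bool) \<Rightarrow> (nat \<Rightarrow> bool) \<Rightarrow> nat" where
  "cnt N E z = card {(i, j). i < j \<and> j < N \<and> E i j \<and> z i \<and> z j}"

lemma graph_state_cnt: "graph_state N E z = complex_of_real ((-1) ^ cnt N E z / sqrt (2 ^ N))"
  unfolding graph_state_def cnt_def by simp

lemma gs_norm: "cnj (graph_state N E z) * graph_state N E z = 1 / 2 ^ N"
proof -
  have "cnj (graph_state N E z) * graph_state N E z = complex_of_real (((-1) ^ cnt N E z / sqrt (2 ^ N))^2)"
    unfolding graph_state_cnt by (simp add: power2_eq_square flip: of_real_mult)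
  also have "((-1::real) ^ cnt N E z / sqrt (2 ^ N))^2 = 1 / 2 ^ N"
    by (simp add: power_divide power_mult_distrib[symmetric] power_even_eq[symmetric])
  finally show ?thesis by simp
qed

lemma card_basis: "card (basis n) = 2 ^ n"
  unfolding basis_def by (simp add: card_PiE)

lemma gs_norm_sum: "(\<Sum>r\<in>basis n. cnj (graph_state (Suc n) E (r(n:=y))) * graph_state (Suc n) E (r(n:=y))) = 1/2"
  by (simp add: gs_norm card_basis)

lemma cnt_split:
  "cnt (Suc n) E (r(n:=True)) = cnt (Suc n) E (r(n:=False)) + card {i. i < n \<and> E i n \<and> r i}"
proof -
  define A where "A = {(i, j). i < j \<and> j < Suc n \<and> E i j \<and> (r(n:=False)) i \<and> (r(n:=False)) j}"
  define B where "B = {i. i < n \<and> E i n \<and> r i}"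
  have eq: "{(i, j). i < j \<and> j < Suc n \<and> E i j \<and> (r(n:=True)) i \<and> (r(n:=True)) j} = A \<union> (\<lambda>i. (i, n)) ` B"
    unfolding A_def B_def by (auto simp: less_Suc_eq)
  have fA: "finite A" unfolding A_def
    by (rule finite_subset[of _ "{..<Suc n} \<times> {..<Suc n}"]) auto
  have fB: "finite B" unfolding B_def by auto
  have dis: "A \<inter> (\<lambda>i. (i, n)) ` B = {}" unfolding A_def B_def by auto
  have "cnt (Suc n) E (r(n:=True)) = card A + card ((\<lambda>i. (i, n)) ` B)"
    unfolding cnt_def eq by (rule card_Un_disjoint[OF fA _ dis]) (use fB in auto)
  also have "card ((\<lambda>i. (i, n)) ` B) = card B" by (rule card_image) (auto simp: inj_on_def)
  finally show ?thesis unfolding cnt_def A_def B_def by simp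
qed

lemma parity_sum_zero:
  assumes j0: "j0 < n" "E j0 n"
  shows "(\<Sum>r\<in>basis n. (-1::real) ^ card {i. i < n \<and> E i n \<and> r i}) = 0"
proof -
  define f where "f r = (-1::real) ^ card {i. i < n \<and> E i n \<and> r i}" for r :: "nat \<Rightarrow> bool"
  define \<sigma> where "\<sigma> r = r(j0 := \<not> r j0)" for r :: "nat \<Rightarrow> bool"
  have sig_in: "\<sigma> r \<in> basis n" if "r \<in> basis n" for r
    using that j0 unfolding basis_def \<sigma>_def by (auto simp: PiE_def extensional_def)
  have sig_inv: "\<sigma> (\<sigma> r) = r" for r unfolding \<sigma>_def by auto
  have flip: "f (\<sigma> r) = - f r" for r
  proof -
    define D where "D = {i. i < n \<and> E i n \<and> r i}"
    have fD: "finite D" unfolding D_def by auto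
    show ?thesis
    proof (cases "r j0")
      case True
      have "{i. i < n \<and> E i n \<and> (\<sigma> r) i} = D - {j0}" unfolding D_def \<sigma>_def using True by auto
      moreover have "j0 \<in> D" unfolding D_def using True j0 by auto
      ultimately have "card D = Suc (card {i. i < n \<and> E i n \<and> (\<sigma> r) i})"
        using fD card.remove by metis
      then show ?thesis unfolding f_def D_def[symmetric] by simp
    next
      case False
      have "{i. i < n \<and> E i n \<and> (\<sigma> r) i} = insert j0 D" unfolding D_def \<sigma>_def using False j0 by auto
      moreover have "j0 \<notin> D" unfolding D_def using False by auto
      ultimately have "card {i. i < n \<and> E i n \<and> (\<sigma> r) i} = Suc (card D)"
        using fD by simp
      then show ?thesis unfolding f_def D_def[symmetric] by simp
    qed
  qed
  have "(\<Sum>r\<in>basis n. f r) = (\<Sum>r\<in>basis n. f (\<sigma> r))"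
    by (rule sum.reindex_bij_witness[of _ \<sigma> \<sigma>]) (auto simp: sig_in sig_inv)
  also have "\<dots> = - (\<Sum>r\<in>basis n. f r)" by (simp add: flip sum_negf)
  finally show ?thesis unfolding f_def by simp
qed

lemma gs_orth:
  assumes j0: "j0 < n" "E j0 n"
  shows "(\<Sum>r\<in>basis n. cnj (graph_state (Suc n) E (r(n:=False))) * graph_state (Suc n) E (r(n:=True))) = 0"
proof -
  have "cnj (graph_state (Suc n) E (r(n:=False))) * graph_state (Suc n) E (r(n:=True))
      = complex_of_real ((-1) ^ card {i. i < n \<and> E i n \<and> r i} / 2 ^ Suc n)" for r
  proof -
    let ?a = "cnt (Suc n) E (r(n:=False))" and ?d = "card {i. i < n \<and> E i n \<and> r i}"
    have "cnj (graph_state (Suc n) E (r(n:=False))) * graph_state (Suc n) E (r(n:=True))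
        = complex_of_real ((-1) ^ ?a / sqrt (2 ^ Suc n) * ((-1) ^ (?a + ?d) / sqrt (2 ^ Suc n)))"
      unfolding graph_state_cnt cnt_split by (simp only: complex_cnj_complex_of_real of_real_mult)
    also have "(-1::real) ^ ?a / sqrt (2 ^ Suc n) * ((-1) ^ (?a + ?d) / sqrt (2 ^ Suc n)) = (-1) ^ (?a + ?a + ?d) / 2 ^ Suc n"
      by (simp add: power_add)
    also have "(-1::real) ^ (?a + ?a + ?d) = (-1) ^ ?d"
      by (simp add: power_add power_even_eq[symmetric] mult_2[symmetric])
    finally show ?thesis .
  qed
  then have "(\<Sum>r\<in>basis n. cnj (graph_state (Suc n) E (r(n:=False))) * graph_state (Suc n) E (r(n:=True)))
     = complex_of_real ((\<Sum>r\<in>basis n. (-1) ^ card {i. i < n \<and> E i n \<and> r i}) / 2 ^ Suc n)"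
    by (simp add: sum_divide_distrib)
  also have "\<dots> = 0" using parity_sum_zero[of j0 n E] j0 by simp
  finally show ?thesis .
qed



definition oct :: "nat \<Rightarrow> bool \<Rightarrow> complex" where
  "oct j y = (if j = 0 then (if y then 0 else 1) else if j = 1 then (if y then 1 else 0)
     else (if y then \<i> ^ (j - 2) else 1))"

definition ww :: "nat \<Rightarrow> complex" where "ww j = (if j < 2 then 1 else 1/4)"

lemma oct_identity:
  fixes p0 p1 q0 q1 :: complex
  shows "(\<Sum>j<6. ww j * (oct j y * cnj (oct j y')) *
      ((cnj (oct j False) * p0 + cnj (oct j True) * p1) * (oct j False * q0 + oct j True * q1)))
    = (if y = y' then p0 * q0 + p1 * q1 else 0) + (if y then p1 else p0) * (if y' then q1 else q0)"
  by (cases y; cases y') (simp_all add: numeral_eq_Suc oct_def ww_def power2_eq_square power3_eq_cube algebra_simps field_simps)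



definition PP :: "(bool \<Rightarrow> (nat \<Rightarrow> bool) \<Rightarrow> complex) \<Rightarrow> (nat \<Rightarrow> bool) \<Rightarrow> (nat \<Rightarrow> bool) \<Rightarrow> complex" where
  "PP e r r' = e False r * cnj (e False r') + e True r * cnj (e True r')"

lemma cnj_delta: "cnj (if b then 1 else 0) = (if b then 1 else 0)" by simp

lemma delta_sum_l: "finite R \<Longrightarrow> r \<in> R \<Longrightarrow> (\<Sum>s\<in>R. (if r = s then 1 else 0) * X s) = (X r :: complex)"
  by (simp add: if_distrib[of "\<lambda>a. a * _"] sum.delta cong: if_cong)

lemma delta_sum_r: "finite R \<Longrightarrow> r \<in> R \<Longrightarrow> (\<Sum>s\<in>R. X s * (if r = s then 1 else 0)) = (X r :: complex)"
  using delta_sum_l[of R r X] by (simp add: mult.commute)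

lemma PP_sq:
  assumes fin: "finite R" and on: "\<And>t t'. (\<Sum>s\<in>R. cnj (e t s) * e t' s) = (if t = t' then 1/2 else 0)"
  shows "(\<Sum>s\<in>R. PP e r s * cnj (PP e r' s)) = PP e r r' / 2"
proof -
  have "(\<Sum>s\<in>R. PP e r s * cnj (PP e r' s)) =
      e False r * cnj (e False r') * (\<Sum>s\<in>R. cnj (e False s) * e False s)
    + e False r * cnj (e True r') * (\<Sum>s\<in>R. cnj (e False s) * e True s)
    + e True r * cnj (e False r') * (\<Sum>s\<in>R. cnj (e True s) * e False s)
    + e True r * cnj (e True r') * (\<Sum>s\<in>R. cnj (e True s) * e True s)"
    unfolding PP_def by (simp add: ring_distribs sum.distrib sum_distrib_left mult_ac)
  also have "\<dots> = PP e r r' / 2" unfolding on PP_def by simp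
  finally show ?thesis .
qed

lemma proj_sq:
  assumes fin: "finite R" and on: "\<And>t t'. (\<Sum>s\<in>R. cnj (e t s) * e t' s) = (if t = t' then 1/2 else 0)"
    and r: "r \<in> R" and r': "r' \<in> R"
  shows "(\<Sum>s\<in>R. ((if r = s then 1 else 0) - of_real D * PP e r s) * cnj ((if r' = s then 1 else 0) - of_real D * PP e r' s))
     = (if r = r' then 1 else 0) - of_real (2 * D - D * D / 2) * PP e r r'"
proof -
  have cP: "cnj (PP e r' r) = PP e r r'" unfolding PP_def by (simp add: mult.commute)
  have "(\<Sum>s\<in>R. ((if r = s then 1 else 0) - of_real D * PP e r s) * cnj ((if r' = s then 1 else 0) - of_real D * PP e r' s))
    = (\<Sum>s\<in>R. (if r = s then 1 else 0) * (if r' = s then 1 else 0))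
      - of_real D * (\<Sum>s\<in>R. (if r = s then 1 else 0) * cnj (PP e r' s))
      - of_real D * (\<Sum>s\<in>R. PP e r s * (if r' = s then 1 else 0))
      + of_real D * of_real D * (\<Sum>s\<in>R. PP e r s * cnj (PP e r' s))"
    by (simp add: cnj_delta ring_distribs sum.distrib sum_subtractf sum_distrib_left mult_ac)
  also have "\<dots> = (if r = r' then 1 else 0) - of_real D * PP e r r' - of_real D * PP e r r'
      + of_real D * of_real D * (PP e r r' / 2)"
    unfolding delta_sum_l[OF fin r] delta_sum_r[OF fin r'] PP_sq[OF fin on] cP by simp
  also have "\<dots> = (if r = r' then 1 else 0) - of_real (2 * D - D * D / 2) * PP e r r'"
    by (simp add: algebra_simps)
  finally show ?thesis .
qed



definition gg :: "real \<Rightarrow> real \<Rightarrow> nat + bool \<times> (nat \<Rightarrow> bool) \<Rightarrow> bool \<Rightarrow> complex" where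
  "gg x K m y = (case m of Inl j \<Rightarrow> of_real (sqrt (x / K)) * (if j < 2 then 1 else 1/2) * oct j y
     | Inr p \<Rightarrow> of_real (sqrt (1 / K)) * (if y = fst p then 1 else 0))"

definition hh :: "real \<Rightarrow> (bool \<Rightarrow> (nat \<Rightarrow> bool) \<Rightarrow> complex) \<Rightarrow> nat + bool \<times> (nat \<Rightarrow> bool) \<Rightarrow> (nat \<Rightarrow> bool) \<Rightarrow> complex" where
  "hh x e m r = (case m of Inl j \<Rightarrow> cnj (oct j False) * e False r + cnj (oct j True) * e True r
     | Inr p \<Rightarrow> (if r = snd p then 1 else 0) - of_real (2 * (1 - sqrt (1 - x / 2))) * PP e r (snd p))"

lemma core_decomp:
  fixes e :: "bool \<Rightarrow> (nat \<Rightarrow> bool) \<Rightarrow> complex" and x K :: real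
  assumes fin: "finite R" and on: "\<And>t t'. (\<Sum>s\<in>R. cnj (e t s) * e t' s) = (if t = t' then 1/2 else 0)"
    and x0: "0 \<le> x" and x2: "x \<le> 2" and K: "K > 0" and r: "r \<in> R" and r': "r' \<in> R"
  shows "(\<Sum>m\<in>{..<6} <+> (UNIV \<times> R). gg x K m y * hh x e m r * cnj (gg x K m y' * hh x e m r'))
    = ((if y = y' \<and> r = r' then 1 else 0) + of_real x * e y r * cnj (e y' r')) / of_real K"
proof -
  have sq1: "of_real (sqrt (x / K)) * of_real (sqrt (x / K)) = (of_real (x / K) :: complex)"
    using x0 K by (simp flip: of_real_mult)
  have sq3: "of_real (sqrt (1 / K)) * of_real (sqrt (1 / K)) = (of_real (1 / K) :: complex)"
    using K by (simp flip: of_real_mult)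
  have inl: "(\<Sum>j<6. gg x K (Inl j) y * hh x e (Inl j) r * cnj (gg x K (Inl j) y' * hh x e (Inl j) r'))
     = of_real (x / K) * ((if y = y' then PP e r r' else 0) + e y r * cnj (e y' r'))"
  proof -
    have "(\<Sum>j<6. gg x K (Inl j) y * hh x e (Inl j) r * cnj (gg x K (Inl j) y' * hh x e (Inl j) r'))
      = (\<Sum>j<6. of_real (x / K) * (ww j * (oct j y * cnj (oct j y')) *
      ((cnj (oct j False) * e False r + cnj (oct j True) * e True r) * (oct j False * cnj (e False r') + oct j True * cnj (e True r')))))"
    proof (intro sum.cong refl)
      fix j
      show "gg x K (Inl j) y * hh x e (Inl j) r * cnj (gg x K (Inl j) y' * hh x e (Inl j) r') =
        of_real (x / K) * (ww j * (oct j y * cnj (oct j y')) *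
        ((cnj (oct j False) * e False r + cnj (oct j True) * e True r) * (oct j False * cnj (e False r') + oct j True * cnj (e True r'))))"
        unfolding gg_def hh_def ww_def sq1[symmetric] by (cases "j < 2") (simp_all add: mult_ac)
    qed
    also have "\<dots> = of_real (x / K) * ((if y = y' then PP e r r' else 0) + e y r * cnj (e y' r'))"
      unfolding sum_distrib_left[symmetric] oct_identity PP_def by (cases y; cases y') simp_all
    finally show ?thesis .
  qed
  have D: "2 * (2 * (1 - sqrt (1 - x / 2))) - 2 * (1 - sqrt (1 - x / 2)) * (2 * (1 - sqrt (1 - x / 2))) / 2 = x"
  proof -
    have gen: "2 * (2 * (1 - q)) - 2 * (1 - q) * (2 * (1 - q)) / 2 = x" if "q * q = 1 - x / 2" for q :: real
    proof -
      have "2 * (2 * (1 - q)) - 2 * (1 - q) * (2 * (1 - q)) / 2 = 2 - 2 * (q * q)" by (simp add: field_simps)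
      then show ?thesis using that by simp
    qed
    show ?thesis by (rule gen) (use x2 in simp)
  qed
  have inr: "(\<Sum>p\<in>UNIV \<times> R. gg x K (Inr p) y * hh x e (Inr p) r * cnj (gg x K (Inr p) y' * hh x e (Inr p) r'))
     = of_real (1 / K) * (if y = y' then 1 else 0) * ((if r = r' then 1 else 0) - of_real x * PP e r r')"
  proof -
    have "(\<Sum>p\<in>UNIV \<times> R. gg x K (Inr p) y * hh x e (Inr p) r * cnj (gg x K (Inr p) y' * hh x e (Inr p) r'))
      = (\<Sum>y0\<in>UNIV. \<Sum>s\<in>R. (of_real (1 / K) * ((if y = y0 then 1 else 0) * (if y' = y0 then 1 else 0))) *
         (((if r = s then 1 else 0) - of_real (2 * (1 - sqrt (1 - x / 2))) * PP e r s) *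
          cnj ((if r' = s then 1 else 0) - of_real (2 * (1 - sqrt (1 - x / 2))) * PP e r' s)))"
      unfolding sum.cartesian_product gg_def hh_def sq3[symmetric]
      by (intro sum.cong refl) (auto simp: cnj_delta mult_ac)
    also have "\<dots> = (\<Sum>y0\<in>UNIV. of_real (1 / K) * ((if y = y0 then 1 else 0) * (if y' = y0 then 1 else 0))) *
        (\<Sum>s\<in>R. ((if r = s then 1 else 0) - of_real (2 * (1 - sqrt (1 - x / 2))) * PP e r s) *
          cnj ((if r' = s then 1 else 0) - of_real (2 * (1 - sqrt (1 - x / 2))) * PP e r' s))"
      by (rule sum_product[symmetric])
    also have "\<dots> = of_real (1 / K) * (if y = y' then 1 else 0) * ((if r = r' then 1 else 0) - of_real x * PP e r r')"
      unfolding proj_sq[OF fin on r r'] D by (cases y; cases y') (simp_all add: UNIV_bool)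
    finally show ?thesis .
  qed
  have plus: "(\<Sum>m\<in>{..<6} <+> (UNIV \<times> R). F m) = (\<Sum>j<6. F (Inl j)) + (\<Sum>p\<in>UNIV \<times> R. F (Inr p))"
    for F :: "nat + bool \<times> (nat \<Rightarrow> bool) \<Rightarrow> complex" by (subst sum.Plus) (use fin in auto)
  have "(\<Sum>m\<in>{..<6} <+> (UNIV \<times> R). gg x K m y * hh x e m r * cnj (gg x K m y' * hh x e m r'))
     = of_real (x / K) * ((if y = y' then PP e r r' else 0) + e y r * cnj (e y' r'))
       + of_real (1 / K) * (if y = y' then 1 else 0) * ((if r = r' then 1 else 0) - of_real x * PP e r r')"
    unfolding plus inl inr ..
  also have "\<dots> = ((if y = y' \<and> r = r' then 1 else 0) + of_real x * e y r * cnj (e y' r')) / of_real K"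
    using K by (cases "y = y'"; cases "r = r'") (simp_all add: field_simps)
  finally show ?thesis .
qed



lemma restrict_basis: "z \<in> basis (Suc n) \<Longrightarrow> restrict z {..<n} \<in> basis n"
  unfolding basis_def by auto

lemma basis_upd_restrict: "z \<in> basis (Suc n) \<Longrightarrow> (restrict z {..<n})(n := z n) = z"
  unfolding basis_def by (rule upd_restrict)

lemma copy_of_Suc_n: "copy_of (Suc n) b j n = b n j"
  unfolding copy_of_def by simp

lemma copy_of_Suc_restrict: "restrict (copy_of (Suc n) b j) {..<n} = copy_of n (restrict b {..<n}) j"
  unfolding copy_of_def by (auto simp: fun_eq_iff)

theorem mainTheorem4:
  fixes N :: nat and E :: "nat \<Rightarrow> nat \<Rightarrow> bool" and x :: real
  assumes "connected_graph N E"
    and "N \<ge> 2"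
    and "0 \<le> x"
    and "x \<le> 2"
  shows "\<not> purifiable N (depol_state N E x) (graph_state N E)"
proof
  assume pur: "purifiable N (depol_state N E x) (graph_state N E)"
  obtain n where Nn: "N = Suc n" using assms(2) by (cases N) auto
  have n0: "n \<noteq> 0" using assms(2) Nn by simp
  have sg: "simple_graph N E" and conn: "\<forall>i<N. \<forall>j<N. E\<^sup>*\<^sup>* i j"
    using assms(1) unfolding connected_graph_def by auto
  have "E\<^sup>*\<^sup>* n 0" using conn Nn by auto
  then obtain j0 where "E n j0"
    by (cases rule: converse_rtranclpE) (use n0 in auto)
  then have j0: "j0 < n" "E j0 n" using sg Nn unfolding simple_graph_def by (auto simp: less_Suc_eq)
  define \<psi> where "\<psi> = graph_state (Suc n) E"
  define e where "e t r = \<psi> (r(n:=t))" for t r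
  have on: "(\<Sum>s\<in>basis n. cnj (e t s) * e t' s) = (if t = t' then 1/2 else 0)" for t t'
  proof -
    have o: "(\<Sum>s\<in>basis n. cnj (e False s) * e True s) = 0"
      unfolding e_def \<psi>_def using gs_orth[of j0 n E] j0 by simp
    have o': "(\<Sum>s\<in>basis n. cnj (e True s) * e False s) = 0"
    proof -
      have "(\<Sum>s\<in>basis n. cnj (e True s) * e False s) = cnj (\<Sum>s\<in>basis n. cnj (e False s) * e True s)"
        by (simp add: cnj_sum mult.commute)
      then show ?thesis using o by simp
    qed
    show ?thesis using o o' gs_norm_sum[of n E] unfolding e_def \<psi>_def
      by (cases t; cases t') auto
  qed
  define K where "K = 2 ^ Suc n + x"
  have K: "K > 0" unfolding K_def using assms(3) by (simp add: add_pos_nonneg)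
  define I where "I = {..<6::nat} <+> ((UNIV::bool set) \<times> basis n)"
  have finI: "finite I" unfolding I_def by auto
  define f where "f m z = gg x K m (z n) * hh x e m (restrict z {..<n})" for m z
  have rho_dec: "depol_state (Suc n) E x z w = (\<Sum>m\<in>I. f m z * cnj (f m w))"
    if z: "z \<in> basis (Suc n)" and w: "w \<in> basis (Suc n)" for z w
  proof -
    have zr: "restrict z {..<n} \<in> basis n" and wr: "restrict w {..<n} \<in> basis n"
      using z w by (auto intro: restrict_basis)
    have ez: "e (z n) (restrict z {..<n}) = \<psi> z" and ew: "e (w n) (restrict w {..<n}) = \<psi> w"
      unfolding e_def using basis_upd_restrict[OF z] basis_upd_restrict[OF w] by auto
    have eqiff: "(z n = w n \<and> restrict z {..<n} = restrict w {..<n}) = (z = w)"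
    proof
      assume "z n = w n \<and> restrict z {..<n} = restrict w {..<n}"
      then have "(restrict z {..<n})(n := z n) = (restrict w {..<n})(n := w n)" by simp
      then show "z = w" unfolding basis_upd_restrict[OF z] basis_upd_restrict[OF w] .
    qed simp
    have "(\<Sum>m\<in>I. f m z * cnj (f m w)) =
      ((if z n = w n \<and> restrict z {..<n} = restrict w {..<n} then 1 else 0) +
        of_real x * e (z n) (restrict z {..<n}) * cnj (e (w n) (restrict w {..<n}))) / of_real K"
      unfolding I_def f_def
      by (rule core_decomp[OF finite_basis on assms(3) assms(4) K zr wr])
    also have "\<dots> = depol_state (Suc n) E x z w"
      unfolding eqiff ez ew depol_state_def \<psi>_def K_def by simp
    finally show ?thesis by simp
  qed
  from pur obtain k A where
      tr: "trace_op N (slocc_output N k A (tensor_power N k (depol_state N E x))) \<noteq> 0"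
    and fid: "fidelity N (graph_state N E) (slocc_output N k A (tensor_power N k (depol_state N E x))) \<ge> 1 - 1/4"
    unfolding purifiable_def by (metis (no_types, lifting) divide_pos_pos zero_less_numeral zero_less_one)
  define S where "S = slocc_output (Suc n) k A (tensor_power (Suc n) k (depol_state (Suc n) E x))"
  define FF where "FF M b = (\<Prod>j<k. f (M j) (copy_of (Suc n) b j))" for M b
  define J where "J = PiE {..<k} (\<lambda>_. I)"
  define U where "U M c = (\<Sum>b\<in>copies_basis (Suc n) k. (\<Prod>i<Suc n. A i (c i) (b i)) * FF M b)" for M c
  have tdec: "tensor_power (Suc n) k (depol_state (Suc n) E x) b b' = (\<Sum>M\<in>J. FF M b * cnj (FF M b'))" for b b'
    unfolding FF_def J_def by (rule tensor_decomp[OF finI rho_dec])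
  have Sdec: "S c c' = (\<Sum>M\<in>J. U M c * cnj (U M c'))" for c c'
    unfolding S_def U_def by (rule slocc_decomp) (rule tdec)
  define G where "G M y = (\<Prod>j<k. gg x K (M j) (y j))" for M y
  define H where "H M r = (\<Prod>j<k. hh x e (M j) (copy_of n r j))" for M r
  define uu where "uu M y = (\<Sum>y'\<in>PiE {..<k} (\<lambda>_. UNIV). A n y y' * G M y')" for M y
  define vv where "vv M c = (\<Sum>r\<in>copies_basis n k. (\<Prod>i<n. A i (c i) (r i)) * H M r)" for M c
  have FFfac: "FF M b = G M (b n) * H M (restrict b {..<n})" for M b
    unfolding FF_def f_def G_def H_def copy_of_Suc_n copy_of_Suc_restrict by (simp add: prod.distrib)
  have fac: "U M c = uu M (c n) * vv M (restrict c {..<n})" if "c \<in> basis (Suc n)" for M c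
  proof -
    have "U M c = uu M (c n) * vv M c"
      unfolding U_def uu_def vv_def by (rule local_product) (rule FFfac)
    moreover have "vv M c = vv M (restrict c {..<n})"
      unfolding vv_def by (intro sum.cong refl arg_cong2[where f="(*)"] prod.cong) auto
    ultimately show ?thesis by simp
  qed
  have nF: "(\<Sum>r\<in>basis n. cnj (\<psi> (r(n:=False))) * \<psi> (r(n:=False))) = 1/2"
    and nT: "(\<Sum>r\<in>basis n. cnj (\<psi> (r(n:=True))) * \<psi> (r(n:=True))) = 1/2"
    and oFT: "(\<Sum>r\<in>basis n. cnj (\<psi> (r(n:=False))) * \<psi> (r(n:=True))) = 0"
    using on[of False False] on[of True True] on[of False True] unfolding e_def by auto
  have tr': "trace_op (Suc n) S \<noteq> 0" using tr unfolding S_def Nn .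
  have "fidelity (Suc n) \<psi> S \<le> 1/2"
    by (rule fidelity_bound[OF nF nT oFT Sdec fac tr'])
  moreover have "fidelity (Suc n) \<psi> S \<ge> 3/4" using fid unfolding S_def \<psi>_def Nn by simp
  ultimately show False by simp
qed

end
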